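(* Let $n\ge 3$ be an integer and let $P_1,\dots,P_n\in\mathbb{R}^2$ be the vertices, labelled counter-clockwise, of a convex regular polygon with $n$ edges, positioned so that $P_1$ lies on the line $\{y=0\}$ and every other vertex satisfies $\overrightarrow{OP_i}\cdot\vec e_2>0$, where $O$ is the origin and $\vec e_2=(0,1)^T$. Indices are taken modulo $n$ (so $P_{n+1}=P_1$). Let $k>0$ and $\kappa>0$ be constants and set $$C:=\frac{|\overrightarrow{P_iP_{i+1}}\times\overrightarrow{P_{i-1}P_i}|}{|\overrightarrow{P_iP_{i+1}}|^2\,|\overrightarrow{P_{i-1}P_i}|^2},$$ which is independent of $i$. For $\bm V=(\vec v_2,\dots,\vec v_n)\in\mathbb{R}^{2n-2}$ (each $\vec v_i\in\mathbb{R}^2$) put $\vec v_1=\vec v_{n+1}=(0,0)^T$ and define $$J_s(\bm V)=\frac{k}{2}\sum_{i=1}^{n}|\vec v_{i+1}-\vec v_i|^2,$$ $$J_b(\bm V)=\frac{\kappa C^2}{2}\sum_{i=2}^{n}\Big|\overrightarrow{P_{i-1}P_i}\cdot\vec v_{i+1}+\big(\overrightarrow{P_iP_{i+1}}-\overrightarrow{P_{i-1}P_i}\big)\cdot\vec v_i-\overrightarrow{P_iP_{i+1}}\cdot\vec v_{i-1}\Big|^2,$$ and $J=J_s+J_b$. Let $$\mathcal U:=\Big\{\bm V=(\vec v_i)_{i=2}^n\in\mathbb{R}^{2n-2}:\ (\overrightarrow{OP_i}+\vec v_i)\cdot\vec e_2\ge 0\ \text{ for all } 2\le i\le n\Big\}.$$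 Then for every $\bm F\in\mathbb{R}^{2n-2}$ the minimization problem $$\inf_{\bm V\in\mathcal U}\big(J(\bm V)-\bm F^T\bm V\big)$$ admits a unique minimizer $\bm U\in\mathcal U$. Equivalently, writing $J(\bm V)=\tfrac12\bm V^T\mathcal A\bm V$ with $\mathcal A$ the symmetric $(2n-2)\times(2n-2)$ matrix of the quadratic form $J$, there exists a unique $\bm U\in\mathcal U$ such that $$(\mathcal A\bm U)\cdot(\bm V-\bm U)\ge \bm F\cdot(\bm V-\bm U)\quad\text{for all }\bm V\in\mathcal U.$$
   Context: This is a discrete model for the linearized deformation of a regular polygon (vertex $P_1$ clamped, i.e. undergoing zero displacement) that is not allowed to cross the rigid flat line $\{y=0\}$ on which it initially touches only at $P_1$. $\bm V$ collects the displacements $\vec v_i$ of the vertices $P_i$, $2\le i\le n$; $J_s$ is the stretching energy of the edges and $J_b$ is the linearized bending energy associated with changes of the angles between consecutive edges. $\bm F=(\vec f_i)_{i=2}^n$ is the array of applied forces on the vertices $P_2,\dots,P_n$. For vectors $a,b\in\mathbb{R}^2$, $a\cdot b$ is the Euclidean inner product and $|a\times b|$ is the absolute value of the scalar cross product $a_1b_2-a_2b_1$. *)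

theory Defs
  imports "HOL-Analysis.Analysis"
begin

text \<open>Points and displacements live in \<open>real^2\<close>; component 1 is x, component 2 is y.
  The vertices are a function \<open>P :: nat \<Rightarrow> real^2\<close>, the vertex \<open>P_i\<close> being \<open>P i\<close>;
  the regular-polygon hypothesis makes \<open>P\<close> n-periodic, so \<open>P (n+1) = P 1\<close>.
  A displacement array \<open>V = (v_2,...,v_n)\<close> is a function \<open>V :: nat \<Rightarrow> real^2\<close>
  vanishing outside \<open>{2..n}\<close>; this encodes \<open>v_1 = v_{n+1} = 0\<close>.\<close>

definition cross2 :: "real^2 \<Rightarrow> real^2 \<Rightarrow> real" where
  "cross2 a b = a$1 * b$2 - a$2 * b$1"

definition e2 :: "real^2" where
  "e2 = vector [0, 1]"

definition regular_ccw_polygon :: "nat \<Rightarrow> (nat \<Rightarrow> real^2) \<Rightarrow> bool" where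
  "regular_ccw_polygon n P \<longleftrightarrow> (\<exists>c r \<theta>. r > 0 \<and>
     (\<forall>i. P i = c + r *\<^sub>R vector [cos (\<theta> + 2 * pi * real i / real n),
                                    sin (\<theta> + 2 * pi * real i / real n)]))"

text \<open>The constant C, computed at a vertex i (it is independent of i).\<close>
definition Cconst :: "(nat \<Rightarrow> real^2) \<Rightarrow> nat \<Rightarrow> real" where
  "Cconst P i = \<bar>cross2 (P (i+1) - P i) (P i - P (i-1))\<bar> /
                 ((norm (P (i+1) - P i))^2 * (norm (P i - P (i-1)))^2)"

definition admissible_disp :: "nat \<Rightarrow> (nat \<Rightarrow> real^2) \<Rightarrow> bool" where
  "admissible_disp n V \<longleftrightarrow> (\<forall>i. i \<notin> {2..n} \<longrightarrow> V i = 0)"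

definition Js :: "nat \<Rightarrow> real \<Rightarrow> (nat \<Rightarrow> real^2) \<Rightarrow> real" where
  "Js n k V = k / 2 * (\<Sum>i=1..n. (norm (V (i+1) - V i))^2)"

definition Jb :: "nat \<Rightarrow> real \<Rightarrow> (nat \<Rightarrow> real^2) \<Rightarrow> (nat \<Rightarrow> real^2) \<Rightarrow> real" where
  "Jb n \<kappa> P V = \<kappa> * (Cconst P 2)^2 / 2 *
     (\<Sum>i=2..n. \<bar>(P i - P (i-1)) \<bullet> V (i+1)
               + ((P (i+1) - P i) - (P i - P (i-1))) \<bullet> V i
               - (P (i+1) - P i) \<bullet> V (i-1)\<bar>^2)"

definition Jtot :: "nat \<Rightarrow> real \<Rightarrow> real \<Rightarrow> (nat \<Rightarrow> real^2) \<Rightarrow> (nat \<Rightarrow> real^2) \<Rightarrow> real" where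
  "Jtot n k \<kappa> P V = Js n k V + Jb n \<kappa> P V"

definition Uset :: "nat \<Rightarrow> (nat \<Rightarrow> real^2) \<Rightarrow> (nat \<Rightarrow> real^2) set" where
  "Uset n P = {V. admissible_disp n V \<and> (\<forall>i\<in>{2..n}. (P i + V i) \<bullet> e2 \<ge> 0)}"

definition work :: "nat \<Rightarrow> (nat \<Rightarrow> real^2) \<Rightarrow> (nat \<Rightarrow> real^2) \<Rightarrow> real" where
  "work n F V = (\<Sum>i=2..n. F i \<bullet> V i)"

end

theory Submission
  imports Defs
begin

definition Lb :: "(nat \<Rightarrow> real^2) \<Rightarrow> (nat \<Rightarrow> real^2) \<Rightarrow> nat \<Rightarrow> real" where
  "Lb P V i = (P i - P (i-1)) \<bullet> V (i+1)
               + ((P (i+1) - P i) - (P i - P (i-1))) \<bullet> V i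
               - (P (i+1) - P i) \<bullet> V (i-1)"

lemma Jb_Lb: "Jb n \<kappa> P V = \<kappa> * (Cconst P 2)^2 / 2 * (\<Sum>i=2..n. (Lb P V i)^2)"
  unfolding Jb_def Lb_def by simp

lemma sum_par:
  fixes a b c e :: "nat \<Rightarrow> real"
  assumes "\<And>i. i \<in> I \<Longrightarrow> a i = (b i + c i)/2 - e i/4"
  shows "sum a I = (sum b I + sum c I)/2 - sum e I/4"
proof -
  have "sum a I = (\<Sum>i\<in>I. (b i + c i)/2 - e i/4)" using assms by (rule sum.cong[OF refl])
  also have "\<dots> = (sum b I + sum c I)/2 - sum e I/4"
    by (simp add: sum_subtractf sum.distrib flip: sum_divide_distrib)
  finally show ?thesis .
qed

lemma norm_par:
  fixes x y :: "real^2"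
  shows "(norm ((1/2) *\<^sub>R (x + y)))^2 = ((norm x)^2 + (norm y)^2)/2 - (norm (x - y))^2/4"
  by (simp add: power2_norm_eq_inner inner_add_left inner_add_right inner_diff_left inner_diff_right
      inner_commute algebra_simps) (simp add: field_simps)

lemma Js_mid:
  "Js n k (\<lambda>i. (1/2) *\<^sub>R (U1 i + U2 i)) = (Js n k U1 + Js n k U2)/2 - Js n k (\<lambda>i. U1 i - U2 i)/4"
proof -
  have "(\<Sum>i=1..n. (norm ((1/2) *\<^sub>R (U1 (i+1) + U2 (i+1)) - (1/2) *\<^sub>R (U1 i + U2 i)))^2)
     = ((\<Sum>i=1..n. (norm (U1 (i+1) - U1 i))^2) + (\<Sum>i=1..n. (norm (U2 (i+1) - U2 i))^2))/2
       - (\<Sum>i=1..n. (norm ((U1 (i+1) - U2 (i+1)) - (U1 i - U2 i)))^2)/4"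
  proof (rule sum_par)
    fix i
    have c: "(1/2) *\<^sub>R (U1 (i+1) + U2 (i+1)) - (1/2) *\<^sub>R (U1 i + U2 i)
       = (1/2) *\<^sub>R ((U1 (i+1) - U1 i) + (U2 (i+1) - U2 i))"
      by (simp add: algebra_simps)
    have d: "(U1 (i+1) - U2 (i+1)) - (U1 i - U2 i) = (U1 (i+1) - U1 i) - (U2 (i+1) - U2 i)"
      by (simp add: algebra_simps)
    show "(norm ((1/2) *\<^sub>R (U1 (i+1) + U2 (i+1)) - (1/2) *\<^sub>R (U1 i + U2 i)))^2
      = ((norm (U1 (i+1) - U1 i))^2 + (norm (U2 (i+1) - U2 i))^2)/2
       - (norm ((U1 (i+1) - U2 (i+1)) - (U1 i - U2 i)))^2/4"
      by (simp only: c d norm_par)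
  qed
  note eq = this
  show ?thesis unfolding Js_def eq by (simp add: field_simps)
qed

lemma Jb_mid:
  "Jb n \<kappa> P (\<lambda>i. (1/2) *\<^sub>R (U1 i + U2 i)) = (Jb n \<kappa> P U1 + Jb n \<kappa> P U2)/2 - Jb n \<kappa> P (\<lambda>i. U1 i - U2 i)/4"
proof -
  have "(\<Sum>i=2..n. (Lb P (\<lambda>i. (1/2) *\<^sub>R (U1 i + U2 i)) i)^2)
     = ((\<Sum>i=2..n. (Lb P U1 i)^2) + (\<Sum>i=2..n. (Lb P U2 i)^2))/2
       - (\<Sum>i=2..n. (Lb P (\<lambda>i. U1 i - U2 i) i)^2)/4"
  proof (rule sum_par)
    fix i
    have a: "Lb P (\<lambda>i. (1/2) *\<^sub>R (U1 i + U2 i)) i = (Lb P U1 i + Lb P U2 i)/2"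
      unfolding Lb_def by (simp add: inner_add_right inner_diff_right algebra_simps)
    have b: "Lb P (\<lambda>i. U1 i - U2 i) i = Lb P U1 i - Lb P U2 i"
      unfolding Lb_def by (simp add: inner_add_right inner_diff_right algebra_simps)
    show "(Lb P (\<lambda>i. (1/2) *\<^sub>R (U1 i + U2 i)) i)^2
      = ((Lb P U1 i)^2 + (Lb P U2 i)^2)/2 - (Lb P (\<lambda>i. U1 i - U2 i) i)^2/4"
      unfolding a b by (simp add: power2_eq_square field_simps)
  qed
  note eq = this
  show ?thesis unfolding Jb_Lb eq by (simp add: field_simps)
qed

lemma Jtot_mid:
  "Jtot n k \<kappa> P (\<lambda>i. (1/2) *\<^sub>R (U1 i + U2 i)) = (Jtot n k \<kappa> P U1 + Jtot n k \<kappa> P U2)/2 - Jtot n k \<kappa> P (\<lambda>i. U1 i - U2 i)/4"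
  unfolding Jtot_def Js_mid Jb_mid by (simp add: field_simps)

lemma work_mid:
  "work n F (\<lambda>i. (1/2) *\<^sub>R (U1 i + U2 i)) = (work n F U1 + work n F U2)/2"
  unfolding work_def by (simp add: inner_add_right sum.distrib flip: sum_divide_distrib)

lemma Jb_nonneg: "\<kappa> > 0 \<Longrightarrow> Jb n \<kappa> P V \<ge> 0"
  unfolding Jb_def by (intro mult_nonneg_nonneg sum_nonneg) auto

lemma Js_nonneg: "k > 0 \<Longrightarrow> Js n k V \<ge> 0"
  unfolding Js_def by (intro mult_nonneg_nonneg sum_nonneg) auto


lemma norm_le_partial:
  assumes adm: "admissible_disp n V"
  shows "1 \<le> i \<Longrightarrow> norm (V i) \<le> (\<Sum>j\<in>{1..<i}. norm (V (j+1) - V j))"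
proof (induction i)
  case 0 then show ?case by simp
next
  case (Suc i)
  show ?case
  proof (cases "i = 0")
    case True
    have "V 1 = 0" using adm unfolding admissible_disp_def by auto
    then show ?thesis using True by simp
  next
    case False
    then have IH: "norm (V i) \<le> (\<Sum>j\<in>{1..<i}. norm (V (j+1) - V j))" using Suc by simp
    have "norm (V (Suc i)) \<le> norm (V i) + norm (V (i+1) - V i)"
      using norm_triangle_ineq[of "V i" "V (i+1) - V i"] by simp
    also have "\<dots> \<le> (\<Sum>j\<in>{1..<i}. norm (V (j+1) - V j)) + norm (V (i+1) - V i)"
      using IH by simp
    also have "\<dots> = (\<Sum>j\<in>{1..<Suc i}. norm (V (j+1) - V j))"
      using False by simp
    finally show ?thesis .
  qed
qed

lemma bound:
  assumes adm: "admissible_disp n V" and k: "k > 0" and ka: "\<kappa> > 0" and n: "n \<ge> 1"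
    and fle: "Jtot n k \<kappa> P V - work n F V \<le> 0" and i: "i \<in> {2..n}"
  shows "norm (V i) \<le> 2 * real n * (\<Sum>j=2..n. norm (F j)) / k"
proof -
  define T where "T = (\<Sum>j=1..n. norm (V (j+1) - V j))"
  define S where "S = (\<Sum>j=1..n. (norm (V (j+1) - V j))^2)"
  define M where "M = (\<Sum>j=2..n. norm (F j))"
  have T0: "T \<ge> 0" unfolding T_def by (simp add: sum_nonneg)
  have M0: "M \<ge> 0" unfolding M_def by (simp add: sum_nonneg)
  have VT: "norm (V j) \<le> T" if j: "j \<in> {2..n}" for j
  proof -
    have "norm (V j) \<le> (\<Sum>l\<in>{1..<j}. norm (V (l+1) - V l))"
      using norm_le_partial[OF adm] j by simp
    also have "\<dots> \<le> T" unfolding T_def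
      by (rule sum_mono2) (use j in auto)
    finally show ?thesis .
  qed
  have TS: "T^2 \<le> S * real n"
    using sum_squared_le_sum_of_squares[of "\<lambda>j. norm (V (j+1) - V j)" "{1..n}"]
    unfolding T_def S_def by simp
  have "work n F V \<le> (\<Sum>j=2..n. norm (F j) * norm (V j))"
    unfolding work_def by (rule sum_mono) (simp add: norm_cauchy_schwarz)
  also have "\<dots> \<le> (\<Sum>j=2..n. norm (F j) * T)"
    by (rule sum_mono) (simp add: VT mult_left_mono)
  also have "\<dots> = M * T" unfolding M_def by (simp add: sum_distrib_right)
  finally have w: "work n F V \<le> M * T" .
  have J: "Jtot n k \<kappa> P V \<ge> k / 2 * S"
    using Jb_nonneg[OF ka, of n P V] unfolding Jtot_def Js_def S_def by simp
  have "k / 2 * S \<le> M * T" using w J fle by linarith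
  then have "k * S \<le> 2 * M * T" by simp
  then have "k * T^2 \<le> 2 * real n * M * T"
  proof -
    have "k * T^2 \<le> k * (S * real n)" using TS k by simp
    also have "\<dots> = (k * S) * real n" by simp
    also have "\<dots> \<le> (2 * M * T) * real n"
      using \<open>k * S \<le> 2 * M * T\<close> by (rule mult_right_mono) simp
    finally show ?thesis by (simp add: algebra_simps)
  qed
  then have TR: "T \<le> 2 * real n * M / k"
  proof (cases "T = 0")
    case True then show ?thesis using M0 k by simp
  next
    case False
    then have "T > 0" using T0 by simp
    then have "k * T \<le> 2 * real n * M"
      using \<open>k * T^2 \<le> 2 * real n * M * T\<close> by (simp add: power2_eq_square)
    then show ?thesis using k by (simp add: field_simps)
  qed
  show ?thesis using VT[OF i] TR unfolding M_def by simp
qed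

theorem mainTheorem1:
  fixes n :: nat and P F :: "nat \<Rightarrow> real^2" and k \<kappa> :: real
  assumes "n \<ge> 3"
    and "regular_ccw_polygon n P"
    and "P 1 \<bullet> e2 = 0"
    and "\<forall>i\<in>{2..n}. P i \<bullet> e2 > 0"
    and "k > 0" and "\<kappa> > 0"
  shows "\<exists>!U. U \<in> Uset n P \<and>
           (\<forall>V\<in>Uset n P. Jtot n k \<kappa> P U - work n F U \<le> Jtot n k \<kappa> P V - work n F V)"
proof -
  define f where "f V = Jtot n k \<kappa> P V - work n F V" for V
  define R where "R = 2 * real n * (\<Sum>j=2..n. norm (F j)) / k"
  define B where "B i = (if i \<in> {2..n} then cball (0::real^2) R else {0})" for i
  define K where "K = PiE UNIV B"
  define C where "C = {V \<in> Uset n P. f V \<le> 0}"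
  have cK: "compact K"
  proof -
    have "compactin (product_topology (\<lambda>i. euclidean) UNIV) (PiE UNIV B)"
      unfolding compactin_PiE B_def by auto
    then show ?thesis unfolding K_def euclidean_product_topology by simp
  qed
  have contf: "continuous_on UNIV f"
    unfolding f_def Jtot_def Js_def Jb_def work_def
    by (intro continuous_intros continuous_on_product_coordinates)
  have clC: "closed C"
  proof -
    have "C = {V. (\<forall>i. i \<notin> {2..n} \<longrightarrow> V i = 0) \<and> (\<forall>i. i \<in> {2..n} \<longrightarrow> (P i + V i) \<bullet> e2 \<ge> 0) \<and> f V \<le> 0}"
      unfolding C_def Uset_def admissible_disp_def by auto
    also have "closed \<dots>"
    proof (intro closed_Collect_conj closed_Collect_all closed_Collect_imp open_Collect_const)
      fix i
      show "closed {V::nat \<Rightarrow> real^2. V i = 0}"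
        by (intro closed_Collect_eq continuous_intros continuous_on_product_coordinates)
      show "closed {V::nat \<Rightarrow> real^2. 0 \<le> (P i + V i) \<bullet> e2}"
        by (intro closed_Collect_le continuous_intros continuous_on_product_coordinates)
      show "closed {V. f V \<le> 0}"
        by (intro closed_Collect_le contf continuous_intros)
    qed
    finally show ?thesis .
  qed
  have CK: "C \<subseteq> K"
  proof
    fix V assume V: "V \<in> C"
    then have adm: "admissible_disp n V" and fV: "f V \<le> 0"
      unfolding C_def Uset_def by auto
    have "V i \<in> B i" for i
    proof (cases "i \<in> {2..n}")
      case True
      then show ?thesis using bound[OF adm \<open>k > 0\<close> \<open>\<kappa> > 0\<close> _ fV[unfolded f_def] True] \<open>n \<ge> 3\<close>
        unfolding B_def R_def by simp
    next
      case False
      then show ?thesis using adm unfolding B_def admissible_disp_def by auto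
    qed
    then show "V \<in> K" unfolding K_def by auto
  qed
  have cC: "compact C"
  proof -
    have "compact (K \<inter> C)" using cK clC by auto
    moreover have "K \<inter> C = C" using CK by auto
    ultimately show ?thesis by simp
  qed
  have f0: "f (\<lambda>_. 0) = 0"
    unfolding f_def Jtot_def Js_def Jb_def work_def by simp
  have U0: "(\<lambda>_. 0) \<in> Uset n P"
    unfolding Uset_def admissible_disp_def using assms(4) by (auto simp: less_imp_le)
  have "(\<lambda>_. 0) \<in> C" unfolding C_def using U0 f0 by simp
  then obtain U where UC: "U \<in> C" and Umin: "\<forall>V\<in>C. f U \<le> f V"
    using continuous_attains_inf[OF cC _ continuous_on_subset[OF contf]] by blast
  have ex: "U \<in> Uset n P \<and> (\<forall>V\<in>Uset n P. f U \<le> f V)"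
  proof (intro conjI ballI)
    show "U \<in> Uset n P" using UC unfolding C_def by simp
    fix V assume "V \<in> Uset n P"
    then show "f U \<le> f V" using Umin UC unfolding C_def by force
  qed
  have uniq: "U1 = U2" if U1: "U1 \<in> Uset n P \<and> (\<forall>V\<in>Uset n P. f U1 \<le> f V)"
    and U2: "U2 \<in> Uset n P \<and> (\<forall>V\<in>Uset n P. f U2 \<le> f V)" for U1 U2
  proof -
    define W where "W = (\<lambda>i. (1/2) *\<^sub>R (U1 i + U2 i))"
    define D where "D = (\<lambda>i. U1 i - U2 i)"
    have W: "W \<in> Uset n P"
    proof -
      have eqW: "(P i + W i) \<bullet> e2 = ((P i + U1 i) \<bullet> e2 + (P i + U2 i) \<bullet> e2) / 2" for i
        unfolding W_def by (simp add: inner_add_left algebra_simps)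
      have "0 \<le> (P i + W i) \<bullet> e2" if "i \<in> {2..n}" for i
        unfolding eqW using U1 U2 that unfolding Uset_def by auto
      moreover have "W i = 0" if "i \<notin> {2..n}" for i
        using U1 U2 that unfolding Uset_def admissible_disp_def W_def by auto
      ultimately show ?thesis unfolding Uset_def admissible_disp_def by auto
    qed
    have e: "f U1 = f U2" using U1 U2 by force
    have "f W = (f U1 + f U2)/2 - Jtot n k \<kappa> P D / 4"
      unfolding f_def W_def D_def Jtot_mid work_mid by (simp add: field_simps)
    moreover have "f U1 \<le> f W" using U1 W by blast
    ultimately have "Jtot n k \<kappa> P D \<le> 0" using e by simp
    moreover have "Jtot n k \<kappa> P D \<ge> Js n k D"
      unfolding Jtot_def using Jb_nonneg[OF \<open>\<kappa> > 0\<close>] by simp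
    ultimately have "Js n k D \<le> 0" by simp
    then have "(\<Sum>i=1..n. (norm (D (i+1) - D i))^2) \<le> 0"
      unfolding Js_def using \<open>k > 0\<close> by (simp add: mult_le_0_iff)
    then have "(\<Sum>i=1..n. (norm (D (i+1) - D i))^2) = 0"
      by (simp add: antisym sum_nonneg)
    then have step: "D (i+1) = D i" if "i \<in> {1..n}" for i
      using that by (subst (asm) sum_nonneg_eq_0_iff) auto
    have D1: "D 1 = 0" using U1 U2 unfolding D_def Uset_def admissible_disp_def by auto
    have Dz: "1 \<le> i \<Longrightarrow> i \<le> n + 1 \<Longrightarrow> D i = 0" for i
    proof (induction i)
      case 0 then show ?case by simp
    next
      case (Suc i)
      show ?case
      proof (cases "i = 0")
        case True then show ?thesis using D1 by simp
      next
        case False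
        then show ?thesis using Suc step[of i] by simp
      qed
    qed
    show "U1 = U2"
    proof
      fix i
      show "U1 i = U2 i"
      proof (cases "i \<in> {2..n}")
        case True
        then have "D i = 0" using Dz by simp
        then show ?thesis unfolding D_def by simp
      next
        case False
        then show ?thesis using U1 U2 unfolding Uset_def admissible_disp_def by auto
      qed
    qed
  qed
  show ?thesis unfolding f_def[symmetric]
    using ex uniq by blast
qed

end
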